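(* Let $A=(a_{i,j})$ and $B=(b_{i,j})$ be skew-symmetric $n\times n$ matrices over $\mathbb F$. Then the biderivation of $\mathbb F(x_1,\dots,x_n)$ defined by $\{x_i,x_j\}_b=a_{i,j}x_ix_j+b_{i,j}$ satisfies the Jacobi identity (i.e. $B$ is a deformation matrix of $A$) if and only if $b_{i,j}(a_{i,k}+a_{j,k})=0$ for all pairwise distinct $i,j,k\in\{1,\dots,n\}$.
   Context: $\mathbb F\in\{\mathbb R,\mathbb C\}$. A biderivation is a skew-symmetric bilinear map which is a derivation in each argument; it is determined by its values on the generators $x_i$. *)

theory Defs
  imports Complex_Main "HOL-Library.Poly_Mapping" "HOL-Computational_Algebra.Fraction_Field"
begin

text \<open>Multivariate polynomials over a field: finitely supported maps from monomials
(exponent vectors, variable x_i has index i) to coefficients.\<close>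
type_synonym 'a mpoly = "(nat \<Rightarrow>\<^sub>0 nat) \<Rightarrow>\<^sub>0 'a"

type_synonym 'a ratfun = "'a mpoly fract"

definition mvar :: "nat \<Rightarrow> 'a::comm_ring_1 mpoly" where
  "mvar i = Poly_Mapping.single (Poly_Mapping.single i 1) 1"

definition mconst :: "'a::comm_ring_1 \<Rightarrow> 'a mpoly" where
  "mconst c = Poly_Mapping.single 0 c"

definition mvars :: "'a::zero mpoly \<Rightarrow> nat set" where
  "mvars p = \<Union> (Poly_Mapping.keys ` Poly_Mapping.keys p)"

definition mpderiv :: "nat \<Rightarrow> 'a::comm_ring_1 mpoly \<Rightarrow> 'a mpoly" where
  "mpderiv i p = (\<Sum>m\<in>Poly_Mapping.keys p.
      Poly_Mapping.single (m - Poly_Mapping.single i 1)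
        (of_nat (Poly_Mapping.lookup m i) * Poly_Mapping.lookup p m))"

definition rpderiv :: "nat \<Rightarrow> 'a::field ratfun \<Rightarrow> 'a ratfun" where
  "rpderiv i f = (case (SOME (p, q). q \<noteq> 0 \<and> f = Fract p q) of (p, q) \<Rightarrow>
      Fract (mpderiv i p * q - p * mpderiv i q) (q * q))"

definition rvar :: "nat \<Rightarrow> 'a::field ratfun" where
  "rvar i = Fract (mvar i) 1"

definition rconst :: "'a::field \<Rightarrow> 'a ratfun" where
  "rconst c = Fract (mconst c) 1"

text \<open>The field F(x_1,...,x_n) as a subfield of the rational functions.\<close>
definition ratfuns :: "nat \<Rightarrow> 'a::field ratfun set" where
  "ratfuns n = {Fract p q | p q. q \<noteq> 0 \<and> mvars p \<subseteq> {1..n} \<and> mvars q \<subseteq> {1..n}}"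

definition biderivation :: "nat \<Rightarrow> (nat \<Rightarrow> nat \<Rightarrow> 'a::field ratfun) \<Rightarrow> 'a ratfun \<Rightarrow> 'a ratfun \<Rightarrow> 'a ratfun" where
  "biderivation n \<pi> f g = (\<Sum>i\<in>{1..n}. \<Sum>j\<in>{1..n}. rpderiv i f * rpderiv j g * \<pi> i j)"

definition satisfies_jacobi :: "nat \<Rightarrow> ('a::field ratfun \<Rightarrow> 'a ratfun \<Rightarrow> 'a ratfun) \<Rightarrow> bool" where
  "satisfies_jacobi n br \<longleftrightarrow> (\<forall>f\<in>ratfuns n. \<forall>g\<in>ratfuns n. \<forall>h\<in>ratfuns n.
      br f (br g h) + br g (br h f) + br h (br f g) = 0)"

definition skew_symmetric :: "nat \<Rightarrow> (nat \<Rightarrow> nat \<Rightarrow> 'a::ab_group_add) \<Rightarrow> bool" where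
  "skew_symmetric n A \<longleftrightarrow> (\<forall>i\<in>{1..n}. \<forall>j\<in>{1..n}. A i j = - A j i)"

end

theory Submission
  imports Defs
begin



lemma lookup_minus_nat: "Poly_Mapping.lookup (f - g) k = Poly_Mapping.lookup f k - (Poly_Mapping.lookup g k :: nat)"
  by (simp add: minus_poly_mapping.rep_eq)

lemma mpderiv_superset:
  assumes "finite S" "Poly_Mapping.keys p \<subseteq> S"
  shows "mpderiv i p = (\<Sum>m\<in>S. Poly_Mapping.single (m - Poly_Mapping.single i 1)
        (of_nat (Poly_Mapping.lookup m i) * Poly_Mapping.lookup p m))"
  unfolding mpderiv_def
  by (rule sum.mono_neutral_left) (use assms in \<open>auto simp: in_keys_iff\<close>)

lemma mpderiv_add: "mpderiv i (p + q) = mpderiv i p + mpderiv i q"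
proof -
  let ?S = "Poly_Mapping.keys p \<union> Poly_Mapping.keys q"
  have "Poly_Mapping.keys (p+q) \<subseteq> ?S" by (rule keys_add)
  then show ?thesis
    by (simp add: mpderiv_superset[of ?S] lookup_add distrib_left single_add sum.distrib)
qed

lemma mpderiv_zero[simp]: "mpderiv i 0 = 0"
  by (simp add: mpderiv_def)

lemma mpderiv_single: "mpderiv i (Poly_Mapping.single m c) =
   Poly_Mapping.single (m - Poly_Mapping.single i 1) (of_nat (Poly_Mapping.lookup m i) * c)"
  by (subst mpderiv_superset[of "{m}"]) auto

lemma mpderiv_sum: "finite S \<Longrightarrow> mpderiv i (\<Sum>x\<in>S. f x) = (\<Sum>x\<in>S. mpderiv i (f x))"
  by (induction S rule: finite_induct) (auto simp: mpderiv_add)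

lemma mpoly_expand: "(p::'a::comm_ring_1 mpoly) = (\<Sum>m\<in>Poly_Mapping.keys p. Poly_Mapping.single m (Poly_Mapping.lookup p m))"
  by (rule poly_mapping_eqI) (simp add: lookup_sum lookup_single when_def in_keys_iff)

lemma single_shift:
  fixes a b :: "nat \<Rightarrow>\<^sub>0 nat"
  shows "Poly_Mapping.single (a - Poly_Mapping.single i 1 + b) (of_nat (Poly_Mapping.lookup a i) * x) =
         Poly_Mapping.single (a + b - Poly_Mapping.single i 1) (of_nat (Poly_Mapping.lookup a i) * (x::'a::comm_ring_1))"
proof (cases "Poly_Mapping.lookup a i = 0")
  case False
  have "a - Poly_Mapping.single i 1 + b = a + b - Poly_Mapping.single i 1"
    by (rule poly_mapping_eqI) (use False in \<open>auto simp: lookup_minus_nat lookup_add lookup_single when_def\<close>)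
  then show ?thesis by simp
qed simp

lemma mpderiv_mult_single:
  "mpderiv i (Poly_Mapping.single a c * Poly_Mapping.single b d) =
    mpderiv i (Poly_Mapping.single a c) * Poly_Mapping.single b d +
    Poly_Mapping.single a c * mpderiv i (Poly_Mapping.single b (d::'a::comm_ring_1))"
proof -
  have 1: "Poly_Mapping.single (a - Poly_Mapping.single i 1 + b) (of_nat (Poly_Mapping.lookup a i) * (c*d)) =
         Poly_Mapping.single (a + b - Poly_Mapping.single i 1) (of_nat (Poly_Mapping.lookup a i) * (c*d))"
    by (rule single_shift)
  have 2: "Poly_Mapping.single (b - Poly_Mapping.single i 1 + a) (of_nat (Poly_Mapping.lookup b i) * (c*d)) =
         Poly_Mapping.single (b + a - Poly_Mapping.single i 1) (of_nat (Poly_Mapping.lookup b i) * (c*d))"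
    by (rule single_shift)
  show ?thesis
    apply (simp add: mpderiv_single mult_single lookup_add)
    using 1 2 by (simp add: algebra_simps single_add)
qed

lemma mpderiv_mult_sums:
  assumes "finite S" "finite T"
  shows "mpderiv i ((\<Sum>m\<in>S. Poly_Mapping.single (f m) (g m)) * (\<Sum>m\<in>T. Poly_Mapping.single (f' m) (g' m))) =
    mpderiv i (\<Sum>m\<in>S. Poly_Mapping.single (f m) (g m)) * (\<Sum>m\<in>T. Poly_Mapping.single (f' m) (g' m)) +
    (\<Sum>m\<in>S. Poly_Mapping.single (f m) (g m)) * mpderiv i (\<Sum>m\<in>T. Poly_Mapping.single (f' m) (g' m :: 'a::comm_ring_1))"
  using assms
  by (simp add: sum_distrib_left sum_distrib_right mpderiv_sum mpderiv_mult_single sum.distrib)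

lemma mpderiv_mult: "mpderiv i (p * q) = mpderiv i p * q + p * mpderiv i (q::'a::comm_ring_1 mpoly)"
  using mpderiv_mult_sums[of "Poly_Mapping.keys p" "Poly_Mapping.keys q" i "\<lambda>m. m" "Poly_Mapping.lookup p" "\<lambda>m. m" "Poly_Mapping.lookup q"]
  by (simp add: mpoly_expand[symmetric])




lemma mpderiv_mvar: "mpderiv i (mvar j :: 'a::comm_ring_1 mpoly) = (if i = j then 1 else 0)"
  by (auto simp: mvar_def mpderiv_single lookup_single)

lemma mpderiv_mconst: "mpderiv i (mconst c :: 'a::comm_ring_1 mpoly) = 0"
  by (simp add: mconst_def mpderiv_single)

lemma mpderiv_one: "mpderiv i (1 :: 'a::comm_ring_1 mpoly) = 0"
  using mpderiv_mconst[of i "1::'a"] by (simp add: mconst_def)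

lemma mpderiv_uminus: "mpderiv i (- p) = - mpderiv i (p :: 'a::comm_ring_1 mpoly)"
  using mpderiv_add[of i "-p" p] by (simp add: eq_neg_iff_add_eq_0)

lemma mpderiv_diff: "mpderiv i (p - q) = mpderiv i p - mpderiv i (q :: 'a::comm_ring_1 mpoly)"
  using mpderiv_add[of i p "-q"] by (simp add: mpderiv_uminus)

lemma rpderiv_Fract:
  fixes p q :: "'a::field mpoly"
  assumes q: "q \<noteq> 0"
  shows "rpderiv i (Fract p q) = Fract (mpderiv i p * q - p * mpderiv i q) (q * q)"
proof -
  let ?P = "\<lambda>(p0, q0). q0 \<noteq> 0 \<and> Fract p q = Fract p0 q0"
  have ex: "?P (p, q)" using q by simp
  obtain p0 q0 where pq: "(SOME x. ?P x) = (p0, q0)" by (cases "SOME x. ?P x") auto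
  have "?P (SOME x. ?P x)" by (rule someI[of ?P, OF ex])
  then have q0: "q0 \<noteq> 0" and e: "Fract p q = Fract p0 q0" using pq by auto
  from e have e1: "p * q0 = p0 * q" using q q0 by (simp add: eq_fract)
  have e2: "mpderiv i p * q0 + p * mpderiv i q0 = mpderiv i p0 * q + p0 * mpderiv i q"
    using arg_cong[OF e1, of "mpderiv i"] by (simp add: mpderiv_mult)
  have "(mpderiv i p0 * q0 - p0 * mpderiv i q0) * (q * q) = (mpderiv i p * q - p * mpderiv i q) * (q0 * q0)"
    using e1 e2 by algebra
  then show ?thesis
    unfolding rpderiv_def using pq q q0 by (simp add: eq_fract)
qed




lemma rpderiv_add: "rpderiv i (f + g) = rpderiv i f + rpderiv i (g :: 'a::field ratfun)"
proof (cases f, cases g)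
  fix a b c d :: "'a mpoly"
  assume f: "f = Fract a b" "b \<noteq> 0" and g: "g = Fract c d" "d \<noteq> 0"
  show ?thesis using f g
    by (simp add: rpderiv_Fract eq_fract mpderiv_add mpderiv_mult algebra_simps)
qed

lemma rpderiv_mult: "rpderiv i (f * g) = f * rpderiv i g + g * rpderiv i (f :: 'a::field ratfun)"
proof (cases f, cases g)
  fix a b c d :: "'a mpoly"
  assume f: "f = Fract a b" "b \<noteq> 0" and g: "g = Fract c d" "d \<noteq> 0"
  show ?thesis using f g
    by (simp add: rpderiv_Fract eq_fract mpderiv_add mpderiv_mult algebra_simps)
qed

lemma rpderiv_zero[simp]: "rpderiv i (0::'a::field ratfun) = 0"
  using rpderiv_add[of i 0 0] by (metis add.right_neutral add_left_cancel)

lemma rpderiv_uminus: "rpderiv i (- f) = - rpderiv i (f::'a::field ratfun)"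
  using rpderiv_add[of i "-f" f] by (simp add: eq_neg_iff_add_eq_0)

lemma rpderiv_sum: "finite S \<Longrightarrow> rpderiv i (\<Sum>x\<in>S. f x) = (\<Sum>x\<in>S. rpderiv i (f x :: 'a::field ratfun))"
  by (induction S rule: finite_induct) (auto simp: rpderiv_add)

lemma rpderiv_rvar: "rpderiv i (rvar j :: 'a::field ratfun) = (if i = j then 1 else 0)"
  by (simp add: rvar_def rpderiv_Fract mpderiv_mvar mpderiv_one fract_collapse)

lemma rpderiv_rconst[simp]: "rpderiv i (rconst c :: 'a::field ratfun) = 0"
  by (simp add: rconst_def rpderiv_Fract mpderiv_mconst mpderiv_one fract_collapse)

lemma rconst_mult: "rconst (a * b) = rconst a * (rconst b :: 'a::field ratfun)"
  by (simp add: rconst_def mconst_def mult_single)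

lemma rconst_add: "rconst (a + b) = rconst a + (rconst b :: 'a::field ratfun)"
  by (simp add: rconst_def mconst_def single_add)

lemma rconst_uminus: "rconst (- a) = - (rconst a :: 'a::field ratfun)"
  by (simp add: rconst_def mconst_def single_uminus)

lemma rconst_eq_0: "rconst a = (0 :: 'a::field ratfun) \<longleftrightarrow> a = 0"
proof
  assume "rconst a = (0 :: 'a ratfun)"
  then have "Poly_Mapping.single 0 a = (0 :: 'a mpoly)"
    by (simp add: rconst_def mconst_def Zero_fract_def eq_fract)
  then show "a = 0" by (metis lookup_single_eq lookup_zero)
qed (simp add: rconst_def mconst_def fract_collapse)




definition emb :: "'a::field mpoly \<Rightarrow> 'a ratfun" where "emb p = Fract p 1"

lemma emb_mult: "emb (p * q) = emb p * emb q" by (simp add: emb_def)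
lemma emb_add: "emb (p + q) = emb p + emb q" by (simp add: emb_def)
lemma emb_one: "emb 1 = 1" by (simp add: emb_def fract_collapse)
lemma emb_zero: "emb 0 = 0" by (simp add: emb_def fract_collapse)
lemma rconst_emb: "rconst c = emb (mconst c)" by (simp add: emb_def rconst_def)
lemma rvar_emb: "rvar c = emb (mvar c)" by (simp add: emb_def rvar_def)
lemma emb_sum: "finite S \<Longrightarrow> emb (\<Sum>x\<in>S. f x) = (\<Sum>x\<in>S. emb (f x))"
  by (induction S rule: finite_induct) (auto simp: emb_add emb_zero)
lemma emb_prod: "finite S \<Longrightarrow> emb (\<Prod>x\<in>S. f x) = (\<Prod>x\<in>S. emb (f x))"
  by (induction S rule: finite_induct) (auto simp: emb_mult emb_one)
lemma emb_power: "emb (p ^ k) = emb p ^ k"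
  by (induction k) (auto simp: emb_mult emb_one)

lemma mvar_power: "(mvar i :: 'a::comm_ring_1 mpoly) ^ k = Poly_Mapping.single (Poly_Mapping.single i k) 1"
proof (induction k)
  case 0 then show ?case by simp
next
  case (Suc k)
  have "Poly_Mapping.single i (Suc k) = Poly_Mapping.single i 1 + Poly_Mapping.single i k"
    by (simp add: single_add[symmetric])
  then show ?case using Suc by (simp add: mvar_def mult_single)
qed

lemma prod_single: "finite S \<Longrightarrow> (\<Prod>i\<in>S. Poly_Mapping.single (g i) (1::'a::comm_ring_1)) = Poly_Mapping.single (\<Sum>i\<in>S. g i) 1"
  by (induction S rule: finite_induct) (auto simp: mult_single)

lemma sum_single_keys:
  assumes "Poly_Mapping.keys m \<subseteq> {1..n}"
  shows "(\<Sum>i\<in>{1..n}. Poly_Mapping.single i (Poly_Mapping.lookup m i)) = (m :: nat \<Rightarrow>\<^sub>0 nat)"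
proof (rule poly_mapping_eqI)
  fix k
  show "Poly_Mapping.lookup (\<Sum>i\<in>{1..n}. Poly_Mapping.single i (Poly_Mapping.lookup m i)) k = Poly_Mapping.lookup m k"
    using assms by (auto simp: lookup_sum lookup_single when_def in_keys_iff)
qed

lemma monomial_expand:
  assumes "Poly_Mapping.keys m \<subseteq> {1..n}"
  shows "Poly_Mapping.single m c = mconst c * (\<Prod>i\<in>{1..n}. mvar i ^ Poly_Mapping.lookup m i :: 'a::comm_ring_1 mpoly)"
proof -
  have "(\<Prod>i\<in>{1..n}. mvar i ^ Poly_Mapping.lookup m i :: 'a mpoly) = Poly_Mapping.single m 1"
    by (simp only: mvar_power prod_single[OF finite_atLeastAtMost] sum_single_keys[OF assms])
  then show ?thesis by (simp add: mconst_def mult_single)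
qed

lemma deriv_vanish:
  fixes D :: "'a::field ratfun \<Rightarrow> 'a ratfun"
  assumes add: "\<And>x y. D (x+y) = D x + D y" and mult: "\<And>x y. D (x*y) = x * D y + y * D x"
    and var: "\<And>i. i \<in> {1..n} \<Longrightarrow> D (rvar i) = 0" and const: "\<And>c. D (rconst c) = 0"
    and f: "f \<in> ratfuns n"
  shows "D f = 0"
proof -
  have D0: "D 0 = 0" using add[of 0 0] by (metis add.right_neutral add_left_cancel)
  have D1: "D 1 = 0" using const[of 1] by (simp add: rconst_def mconst_def fract_collapse)
  have Dsum: "finite S \<Longrightarrow> (\<And>x. x \<in> S \<Longrightarrow> D (g x) = 0) \<Longrightarrow> D (\<Sum>x\<in>S. g x) = 0" for S g
    by (induction S rule: finite_induct) (auto simp: D0 add)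
  have Dprod: "finite S \<Longrightarrow> (\<And>x. x \<in> S \<Longrightarrow> D (g x) = 0) \<Longrightarrow> D (\<Prod>x\<in>S. g x) = 0" for S g
    by (induction S rule: finite_induct) (auto simp: D1 mult)
  have Dpow: "D y = 0 \<Longrightarrow> D (y ^ k) = 0" for y k
    by (induction k) (auto simp: D1 mult)
  have Dmono: "D (emb (Poly_Mapping.single m c)) = 0" if "Poly_Mapping.keys m \<subseteq> {1..n}" for m c
  proof -
    have "emb (Poly_Mapping.single m c) = rconst c * (\<Prod>i\<in>{1..n}. rvar i ^ Poly_Mapping.lookup m i)"
      by (simp add: monomial_expand[OF that] emb_mult emb_prod emb_power rconst_emb rvar_emb)
    moreover have "D (\<Prod>i\<in>{1..n}. rvar i ^ Poly_Mapping.lookup m i) = 0"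
      by (rule Dprod) (simp_all add: Dpow var)
    ultimately show ?thesis by (simp add: mult const)
  qed
  have Dpoly: "D (emb p) = 0" if "mvars p \<subseteq> {1..n}" for p
  proof -
    have "emb p = (\<Sum>m\<in>Poly_Mapping.keys p. emb (Poly_Mapping.single m (Poly_Mapping.lookup p m)))"
      by (subst mpoly_expand) (simp add: emb_sum)
    moreover have "Poly_Mapping.keys m \<subseteq> {1..n}" if "m \<in> Poly_Mapping.keys p" for m
      using \<open>mvars p \<subseteq> {1..n}\<close> that unfolding mvars_def by auto
    ultimately show ?thesis by (simp add: Dsum Dmono)
  qed
  have Dinv: "D (inverse y) = 0" if "D y = 0" for y
  proof (cases "y = 0")
    case True then show ?thesis by (simp add: D0)
  next
    case False
    have "D (y * inverse y) = 0" using False D1 by simp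
    then have "y * D (inverse y) = 0" using that by (simp add: mult)
    then show ?thesis using False by simp
  qed
  from f obtain p q where fq: "f = Fract p q" "q \<noteq> 0" "mvars p \<subseteq> {1..n}" "mvars q \<subseteq> {1..n}"
    unfolding ratfuns_def by blast
  have "f = emb p * inverse (emb q)" using fq by (simp add: emb_def)
  then show ?thesis using fq by (simp add: mult Dpoly Dinv)
qed




locale bider =
  fixes br :: "'a::field ratfun \<Rightarrow> 'a ratfun \<Rightarrow> 'a ratfun"
  assumes add_left: "br (f+g) h = br f h + br g h"
    and mult_left: "br (f*g) h = f * br g h + g * br f h"
    and skew: "br g f = - br f g"
    and alt: "br f f = 0"
    and const_left: "br (rconst c) h = 0"
begin

lemma add_right: "br h (f+g) = br h f + br h g"
proof -
  have "br h (f+g) = - br (f+g) h" by (rule skew)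
  also have "\<dots> = - (br f h + br g h)" by (simp add: add_left)
  also have "br f h = - br h f" by (rule skew)
  also have "br g h = - br h g" by (rule skew)
  finally show ?thesis by simp
qed

lemma mult_right: "br h (f*g) = f * br h g + g * br h f"
proof -
  have "br h (f*g) = - br (f*g) h" by (rule skew)
  also have "\<dots> = - (f * br g h + g * br f h)" by (simp add: mult_left)
  also have "br f h = - br h f" by (rule skew)
  also have "br g h = - br h g" by (rule skew)
  finally show ?thesis by simp
qed

lemma zero_right: "br h 0 = 0"
  using add_right[of h 0 0] by (metis add.right_neutral add_left_cancel)

lemma minus_right: "br h (- f) = - br h f"
  using add_right[of h "-f" f] zero_right[of h] by (simp add: eq_neg_iff_add_eq_0)

lemma diff_right: "br h (f - g) = br h f - br h g"
  using add_right[of h f "-g"] minus_right[of h g] by simp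

definition J where "J f g h = br f (br g h) + br g (br h f) + br h (br f g)"

lemma J_cyc: "J f g h = J g h f" unfolding J_def by (simp add: ac_simps)

lemma J_add1: "J (f1 + f2) g h = J f1 g h + J f2 g h"
  unfolding J_def by (simp add: add_left add_right)

lemma J_mult1: "J (f1 * f2) g h = f1 * J f2 g h + f2 * J f1 g h"
proof -
  have s1: "br f1 g = - br g f1" "br f2 g = - br g f2" by (rule skew)+
  show ?thesis unfolding J_def
    by (simp add: mult_left mult_right add_left add_right s1 minus_right diff_right algebra_simps)
qed

lemma const_right: "br h (rconst c) = 0"
  using skew[of h "rconst c"] const_left by simp


lemma J_const1: "J (rconst c) g h = 0"
  unfolding J_def by (simp add: const_left const_right zero_right)

lemma J_ff: "J f f h = 0"
  unfolding J_def using skew[of h f] alt[of f] by (simp add: minus_right zero_right)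

lemma vanish1:
  assumes "\<And>i. i \<in> {1..n} \<Longrightarrow> D (rvar i) = 0" "\<And>c. D (rconst c) = 0"
    and "\<And>x y. D (x+y) = D x + D y" "\<And>x y. D (x*y) = x * D y + y * D x"
    and "f \<in> ratfuns n"
  shows "D f = 0"
  using deriv_vanish[of D n f] assms by blast

lemma jacobi_from_gen:
  assumes gen: "\<And>i j k. i \<in> {1..n} \<Longrightarrow> j \<in> {1..n} \<Longrightarrow> k \<in> {1..n} \<Longrightarrow> J (rvar i) (rvar j) (rvar k) = 0"
    and f: "f \<in> ratfuns n" and g: "g \<in> ratfuns n" and h: "h \<in> ratfuns n"
  shows "J f g h = 0"
proof -
  have s1: "J f (rvar j) (rvar k) = 0" if "j \<in> {1..n}" "k \<in> {1..n}" "f \<in> ratfuns n" for f j k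
    by (rule vanish1[where D = "\<lambda>f. J f (rvar j) (rvar k)"]) (use that gen in \<open>auto simp: J_const1 J_add1 J_mult1\<close>)
  have s2: "J f g (rvar k) = 0" if "k \<in> {1..n}" "f \<in> ratfuns n" "g \<in> ratfuns n" for f g k
  proof -
    have "J g (rvar k) f = 0"
    proof (rule vanish1[where D = "\<lambda>g. J g (rvar k) f"])
      fix i assume "i \<in> {1..n}"
      then show "J (rvar i) (rvar k) f = 0" using s1[of i k f] that J_cyc[of f "rvar i" "rvar k"] by simp
    qed (use that in \<open>auto simp: J_const1 J_add1 J_mult1\<close>)
    then show ?thesis using J_cyc[of f g "rvar k"] by simp
  qed
  have "J h f g = 0"
  proof (rule vanish1[where D = "\<lambda>h. J h f g"])
    fix i assume "i \<in> {1..n}"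
    then show "J (rvar i) f g = 0" using s2[of i f g] f g J_cyc[of f g "rvar i"] J_cyc[of g "rvar i" f] by simp
  qed (use h in \<open>auto simp: J_const1 J_add1 J_mult1\<close>)
  then show ?thesis by (simp only: J_cyc[of f g h] J_cyc[of g h f])
qed

end





lemma br_add_left: "biderivation n \<pi> (f+g) h = biderivation n \<pi> f h + biderivation n \<pi> g h"
  unfolding biderivation_def by (simp add: rpderiv_add distrib_right sum.distrib)

lemma br_mult_left: "biderivation n \<pi> (f*g) h = f * biderivation n \<pi> g h + g * biderivation n \<pi> f h"
  unfolding biderivation_def by (simp add: rpderiv_mult distrib_right sum.distrib sum_distrib_left algebra_simps)

lemma br_const_left: "biderivation n \<pi> (rconst c) h = 0"
  unfolding biderivation_def by simp

lemma br_skew: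
  assumes "\<And>i j. i \<in> {1..n} \<Longrightarrow> j \<in> {1..n} \<Longrightarrow> \<pi> j i = - \<pi> i j"
  shows "biderivation n \<pi> g f = - biderivation n \<pi> f g"
proof -
  have "biderivation n \<pi> g f = (\<Sum>i\<in>{1..n}. \<Sum>j\<in>{1..n}. rpderiv j g * rpderiv i f * \<pi> j i)"
    unfolding biderivation_def by (rule sum.swap)
  also have "\<dots> = (\<Sum>i\<in>{1..n}. \<Sum>j\<in>{1..n}. - (rpderiv i f * rpderiv j g * \<pi> i j))"
  proof (intro sum.cong refl)
    fix i j assume "i \<in> {1..n}" "j \<in> {1..n}"
    then have e: "\<pi> i j = - \<pi> j i" using assms[of j i] by simp
    show "rpderiv j g * rpderiv i f * \<pi> j i = - (rpderiv i f * rpderiv j g * \<pi> i j)"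
      by (simp only: e) (simp add: algebra_simps)
  qed
  finally show ?thesis unfolding biderivation_def by (simp add: sum_negf)
qed

lemma ratfun_self_neg:
  assumes "x = - (x :: 'a::field_char_0 ratfun)"
  shows "x = 0"
proof -
  have "x + x = 0" using assms eq_neg_iff_add_eq_0 by blast
  then have x2: "2 * x = 0" by (simp only: mult_2)
  have r1: "rconst 1 = (1::'a ratfun)" by (simp add: rconst_def mconst_def fract_collapse)
  have "rconst 2 = (2::'a ratfun)" using rconst_add[of "1::'a" 1] r1 by (simp only: one_add_one)
  moreover have "rconst 2 \<noteq> (0::'a ratfun)" by (simp only: rconst_eq_0) simp
  ultimately have "(2::'a ratfun) \<noteq> 0" by metis
  with x2 show ?thesis by (simp only: mult_eq_0_iff) simp
qed

lemma bider_interp: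
  assumes "\<And>i j. i \<in> {1..n} \<Longrightarrow> j \<in> {1..n} \<Longrightarrow> \<pi> j i = - \<pi> i j"
  shows "bider (biderivation n (\<pi> :: nat \<Rightarrow> nat \<Rightarrow> 'a::field_char_0 ratfun))"
proof
  fix f g h :: "'a ratfun" and c
  show "biderivation n \<pi> (f + g) h = biderivation n \<pi> f h + biderivation n \<pi> g h" by (rule br_add_left)
  show "biderivation n \<pi> (f * g) h = f * biderivation n \<pi> g h + g * biderivation n \<pi> f h" by (rule br_mult_left)
  show "biderivation n \<pi> g f = - biderivation n \<pi> f g" using assms by (rule br_skew)
  show "biderivation n \<pi> f f = 0" by (rule ratfun_self_neg, rule br_skew[OF assms])
  show "biderivation n \<pi> (rconst c) h = 0" by (rule br_const_left)
qed

lemma if01_mult: "(if P then 1 else 0) * y = (if P then y else (0::'b::semiring_1))" by simp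
lemma if0_mult: "(if P then x else 0) * y = (if P then x * y else (0::'b::semiring_1))" by simp
lemma sum_if_const: "(\<Sum>j\<in>S. if P then F j else 0) = (if P then (\<Sum>j\<in>S. F j) else (0::'b::comm_monoid_add))" by simp

lemma br_var_left:
  assumes "a \<in> {1..n}"
  shows "biderivation n \<pi> (rvar a) X = (\<Sum>j\<in>{1..n}. rpderiv j X * \<pi> a j)"
  unfolding biderivation_def using assms by (simp add: rpderiv_rvar if01_mult if0_mult sum_if_const)

lemma br_var_var:
  assumes "a \<in> {1..n}" "b \<in> {1..n}"
  shows "biderivation n \<pi> (rvar a) (rvar b) = \<pi> a b"
  using assms by (simp add: br_var_left rpderiv_rvar if01_mult)




lemma rp_pi: "rpderiv l (rconst a * rvar j * rvar k + rconst b :: 'a::field ratfun) =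
   rconst a * ((if l = j then 1 else 0) * rvar k + rvar j * (if l = k then 1 else 0))"
  by (simp add: rpderiv_add rpderiv_mult rpderiv_rvar algebra_simps)

lemma br_var_pi:
  fixes A B :: "nat \<Rightarrow> nat \<Rightarrow> 'a::field"
  assumes \<pi>_def: "\<pi> = (\<lambda>i j. rconst (A i j) * rvar i * rvar j + rconst (B i j))"
  assumes i: "i \<in> {1..n}" and j: "j \<in> {1..n}" and k: "k \<in> {1..n}"
  shows "biderivation n \<pi> (rvar i) (\<pi> j k) = rconst (A j k) * (rvar k * \<pi> i j + rvar j * \<pi> i k)"
proof -
  have e: "rpderiv l (\<pi> j k) * \<pi> i l = (if l = j then rconst (A j k) * rvar k * \<pi> i j else 0) +
      (if l = k then rconst (A j k) * rvar j * \<pi> i k else 0)" for l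
    unfolding \<pi>_def rp_pi by (simp add: algebra_simps)
  show ?thesis
    using i j k by (simp only: br_var_left[OF i] e sum.distrib sum.delta finite_atLeastAtMost if_True) (simp add: algebra_simps)
qed

lemma rvar_in: "i \<in> {1..n} \<Longrightarrow> rvar i \<in> ratfuns n"
  unfolding ratfuns_def rvar_def
  by (rule CollectI, rule exI[of _ "mvar i"], rule exI[of _ 1])
     (simp add: mvars_def mvar_def)

lemma pi_skew:
  fixes A B :: "nat \<Rightarrow> nat \<Rightarrow> 'a::field_char_0"
  assumes \<pi>_def: "\<pi> = (\<lambda>i j. rconst (A i j) * rvar i * rvar j + rconst (B i j))"
  assumes sA: "skew_symmetric n A" and sB: "skew_symmetric n B"
    and a: "a \<in> {1..n}" and b: "b \<in> {1..n}"
  shows "\<pi> b a = - \<pi> a b"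
proof -
  have "A b a = - A a b" "B b a = - B a b"
    using sA[unfolded skew_symmetric_def, rule_format, OF b a] sB[unfolded skew_symmetric_def, rule_format, OF b a] .
  then show ?thesis unfolding \<pi>_def by (simp only: rconst_uminus) (simp add: algebra_simps)
qed

lemma bider_pi:
  fixes A B :: "nat \<Rightarrow> nat \<Rightarrow> 'a::field_char_0"
  assumes \<pi>_def: "\<pi> = (\<lambda>i j. rconst (A i j) * rvar i * rvar j + rconst (B i j))"
  assumes sA: "skew_symmetric n A" and sB: "skew_symmetric n B"
  shows "bider (biderivation n \<pi>)"
  by (rule bider_interp) (rule pi_skew[OF \<pi>_def sA sB])

lemma J_gen:
  fixes A B :: "nat \<Rightarrow> nat \<Rightarrow> 'a::field_char_0"
  assumes \<pi>_def: "\<pi> = (\<lambda>i j. rconst (A i j) * rvar i * rvar j + rconst (B i j))"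
  assumes sA: "skew_symmetric n A" and sB: "skew_symmetric n B"
    and i: "i \<in> {1..n}" and j: "j \<in> {1..n}" and k: "k \<in> {1..n}"
  shows "bider.J (biderivation n \<pi>) (rvar i) (rvar j) (rvar k) =
     rvar k * rconst (B i j * (A i k + A j k)) + rvar j * rconst (B k i * (A k j + A i j))
     + rvar i * rconst (B j k * (A j i + A k i))"
proof -
  note sA' = sA[unfolded skew_symmetric_def, rule_format]
  note sB' = sB[unfolded skew_symmetric_def, rule_format]
  have a1: "A j i = - A i j" "A k j = - A j k" "A i k = - A k i"
    using sA'[OF j i] sA'[OF k j] sA'[OF i k] .
  have b1: "B j i = - B i j" "B k j = - B j k" "B i k = - B k i"
    using sB'[OF j i] sB'[OF k j] sB'[OF i k] .
  have "bider.J (biderivation n \<pi>) (rvar i) (rvar j) (rvar k) =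
     rconst (A j k) * (rvar k * \<pi> i j + rvar j * \<pi> i k) +
     rconst (A k i) * (rvar i * \<pi> j k + rvar k * \<pi> j i) +
     rconst (A i j) * (rvar j * \<pi> k i + rvar i * \<pi> k j)"
    unfolding bider.J_def[OF bider_pi[OF \<pi>_def sA sB]]
    by (simp only: br_var_var[OF j k] br_var_var[OF k i] br_var_var[OF i j] br_var_pi[OF \<pi>_def i j k]
       br_var_pi[OF \<pi>_def j k i] br_var_pi[OF \<pi>_def k i j])
  also have "\<dots> = rvar k * rconst (B i j * (A i k + A j k)) + rvar j * rconst (B k i * (A k j + A i j))
     + rvar i * rconst (B j k * (A j i + A k i))"
    unfolding \<pi>_def a1 b1 rconst_mult rconst_add rconst_uminus
    by algebra
  finally show ?thesis .
qed


theorem proposition5p2: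
  fixes A B :: "nat \<Rightarrow> nat \<Rightarrow> 'a::real_normed_field"
    and n :: nat
  assumes "skew_symmetric n A" and "skew_symmetric n B"
  shows "satisfies_jacobi n (biderivation n
            (\<lambda>i j. rconst (A i j) * rvar i * rvar j + rconst (B i j)))
         \<longleftrightarrow> (\<forall>i\<in>{1..n}. \<forall>j\<in>{1..n}. \<forall>k\<in>{1..n}.
               i \<noteq> j \<and> j \<noteq> k \<and> i \<noteq> k \<longrightarrow> B i j * (A i k + A j k) = 0)"
proof -
  define \<pi> :: "nat \<Rightarrow> nat \<Rightarrow> 'a ratfun" where "\<pi> = (\<lambda>i j. rconst (A i j) * rvar i * rvar j + rconst (B i j))"
  have pd: "\<pi> = (\<lambda>i j. rconst (A i j) * rvar i * rvar j + rconst (B i j))" by (simp add: \<pi>_def)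
  interpret bider "biderivation n \<pi>" by (rule bider_pi[OF pd assms])
  have JJ: "satisfies_jacobi n (biderivation n \<pi>) \<longleftrightarrow>
      (\<forall>f\<in>ratfuns n. \<forall>g\<in>ratfuns n. \<forall>h\<in>ratfuns n. J f g h = 0)"
    unfolding satisfies_jacobi_def J_def ..
  have gen: "J (rvar i) (rvar j) (rvar k) =
     rvar k * rconst (B i j * (A i k + A j k)) + rvar j * rconst (B k i * (A k j + A i j))
     + rvar i * rconst (B j k * (A j i + A k i))"
    if "i \<in> {1..n}" "j \<in> {1..n}" "k \<in> {1..n}" for i j k
    by (rule J_gen[OF pd assms that])
  show ?thesis unfolding pd[symmetric] JJ
  proof
    assume H: "\<forall>f\<in>ratfuns n. \<forall>g\<in>ratfuns n. \<forall>h\<in>ratfuns n. J f g h = 0"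
    show "\<forall>i\<in>{1..n}. \<forall>j\<in>{1..n}. \<forall>k\<in>{1..n}. i \<noteq> j \<and> j \<noteq> k \<and> i \<noteq> k \<longrightarrow> B i j * (A i k + A j k) = 0"
    proof (intro ballI impI)
      fix i j k assume ijk: "i \<in> {1..n}" "j \<in> {1..n}" "k \<in> {1..n}" and d: "i \<noteq> j \<and> j \<noteq> k \<and> i \<noteq> k"
      have "J (rvar i) (rvar j) (rvar k) = 0" using H rvar_in ijk by blast
      then have "rpderiv k (J (rvar i) (rvar j) (rvar k)) = 0" by simp
      moreover have "rpderiv k (J (rvar i) (rvar j) (rvar k)) = rconst (B i j * (A i k + A j k))"
        unfolding gen[OF ijk] using d by (simp add: rpderiv_add rpderiv_mult rpderiv_rvar)
      ultimately show "B i j * (A i k + A j k) = 0" by (simp add: rconst_eq_0)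
    qed
  next
    assume C: "\<forall>i\<in>{1..n}. \<forall>j\<in>{1..n}. \<forall>k\<in>{1..n}. i \<noteq> j \<and> j \<noteq> k \<and> i \<noteq> k \<longrightarrow> B i j * (A i k + A j k) = 0"
    have G: "J (rvar i) (rvar j) (rvar k) = 0" if ijk: "i \<in> {1..n}" "j \<in> {1..n}" "k \<in> {1..n}" for i j k
    proof (cases "i = j \<or> j = k \<or> i = k")
      case True
      then show ?thesis
      proof (elim disjE)
        assume e: "i = j" then show ?thesis by (simp only: e J_ff)
      next
        assume e: "j = k" then show ?thesis by (simp only: e J_cyc[of "rvar i" "rvar k" "rvar k"] J_ff)
      next
        assume e: "i = k" then show ?thesis
          by (simp only: e J_cyc[of "rvar k" "rvar j" "rvar k"] J_cyc[of "rvar j" "rvar k" "rvar k"] J_ff)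
      qed
    next
      case False
      have r0: "rconst 0 = (0::'a ratfun)" by (simp add: rconst_eq_0)
      have c1: "B i j * (A i k + A j k) = 0" by (rule C[rule_format, OF ijk]) (use False in blast)
      moreover have c2: "B k i * (A k j + A i j) = 0" by (rule C[rule_format, OF ijk(3) ijk(1) ijk(2)]) (use False in blast)
      moreover have c3: "B j k * (A j i + A k i) = 0" by (rule C[rule_format, OF ijk(2) ijk(3) ijk(1)]) (use False in blast)
      ultimately show ?thesis unfolding gen[OF ijk] by (simp only: c1 c2 c3 r0 mult_zero_right add_0_right)
    qed
    show "\<forall>f\<in>ratfuns n. \<forall>g\<in>ratfuns n. \<forall>h\<in>ratfuns n. J f g h = 0"
      using jacobi_from_gen[OF G] by blast
  qed
qed



end
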